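(* Let $G$ be a connected graph, $k \ge 2$ an integer, and $\Pi_1, \Pi_2 \in \mathrm{Part}(G,k)$. Then there exists a block vertex $v \in V(G)$ such that a sequence of at most three recombination moves transforms $\Pi_1$ into a connected $k$-partition in which $\{v\}$ is a district, and a sequence of at most three recombination moves transforms $\Pi_2$ into a connected $k$-partition in which $\{v\}$ is a district.
   Context: For a graph $G$ and positive integer $k$, a connected $k$-partition of $G$ is a partition of $V(G)$ into $k$ disjoint nonempty sets $V_1,\dots,V_k$ (called districts) such that each induced subgraph $G[V_i]$ is connected; $\mathrm{Part}(G,k)$ denotes the set of all connected $k$-partitions of $G$. Two distinct connected $k$-partitions $\{V_1,\dots,V_k\}$ and $\{W_1,\dots,W_k\}$ are related by a recombination move if there are indices $i,j$ and a permutation $\pi$ of $\{1,\dots,k\}$ with $V_i \cup V_j = W_{\pi(i)} \cup W_{\pi(j)}$ and $V_\ell = W_{\pi(\ell)}$ for all $\ell \notin \{i,j\}$ (here there is no size restriction on districts). A block is a maximal biconnected component; a vertex is a cut vertex if it lies in two or more blocks, and a block vertex otherwise. *)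

theory Defs
  imports Main
begin

definition simple_graph :: "'a set \<Rightarrow> ('a \<Rightarrow> 'a \<Rightarrow> bool) \<Rightarrow> bool" where
  "simple_graph V E \<longleftrightarrow> finite V \<and> (\<forall>x y. E x y \<longrightarrow> x \<in> V \<and> y \<in> V)
     \<and> (\<forall>x y. E x y \<longrightarrow> E y x) \<and> (\<forall>x. \<not> E x x)"

definition connected_on :: "('a \<Rightarrow> 'a \<Rightarrow> bool) \<Rightarrow> 'a set \<Rightarrow> bool" where
  "connected_on E S \<longleftrightarrow> S \<noteq> {} \<and>
     (\<forall>x\<in>S. \<forall>y\<in>S. (\<lambda>a b. a \<in> S \<and> b \<in> S \<and> E a b)\<^sup>*\<^sup>* x y)"

definition conn_partition :: "'a set \<Rightarrow> ('a \<Rightarrow> 'a \<Rightarrow> bool) \<Rightarrow> nat \<Rightarrow> 'a set set \<Rightarrow> bool" where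
  "conn_partition V E k P \<longleftrightarrow> \<Union>P = V \<and> (\<forall>A\<in>P. \<forall>B\<in>P. A \<noteq> B \<longrightarrow> A \<inter> B = {})
     \<and> (\<forall>A\<in>P. A \<noteq> {} \<and> connected_on E A) \<and> finite P \<and> card P = k"

definition recomb_move :: "'a set \<Rightarrow> ('a \<Rightarrow> 'a \<Rightarrow> bool) \<Rightarrow> nat \<Rightarrow> 'a set set \<Rightarrow> 'a set set \<Rightarrow> bool" where
  "recomb_move V E k P Q \<longleftrightarrow> conn_partition V E k P \<and> conn_partition V E k Q \<and> P \<noteq> Q \<and>
     (\<exists>A\<in>P. \<exists>B\<in>P. \<exists>C\<in>Q. \<exists>D\<in>Q. A \<noteq> B \<and> C \<noteq> D \<and> A \<union> B = C \<union> D \<and> P - {A, B} = Q - {C, D})"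

definition nonseparable :: "'a set \<Rightarrow> ('a \<Rightarrow> 'a \<Rightarrow> bool) \<Rightarrow> 'a set \<Rightarrow> bool" where
  "nonseparable V E B \<longleftrightarrow> B \<subseteq> V \<and> connected_on E B \<and>
     (\<forall>x\<in>B. B - {x} \<noteq> {} \<longrightarrow> connected_on E (B - {x}))"

definition is_block :: "'a set \<Rightarrow> ('a \<Rightarrow> 'a \<Rightarrow> bool) \<Rightarrow> 'a set \<Rightarrow> bool" where
  "is_block V E B \<longleftrightarrow> nonseparable V E B \<and> (\<forall>C. nonseparable V E C \<and> B \<subseteq> C \<longrightarrow> C = B)"

definition cut_vertex :: "'a set \<Rightarrow> ('a \<Rightarrow> 'a \<Rightarrow> bool) \<Rightarrow> 'a \<Rightarrow> bool" where
  "cut_vertex V E v \<longleftrightarrow> (\<exists>B1 B2. is_block V E B1 \<and> is_block V E B2 \<and> B1 \<noteq> B2 \<and> v \<in> B1 \<and> v \<in> B2)"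

definition block_vertex :: "'a set \<Rightarrow> ('a \<Rightarrow> 'a \<Rightarrow> bool) \<Rightarrow> 'a \<Rightarrow> bool" where
  "block_vertex V E v \<longleftrightarrow> v \<in> V \<and> \<not> cut_vertex V E v"

end

theory Submission
  imports Defs
begin


definition reach :: "('a \<Rightarrow> 'a \<Rightarrow> bool) \<Rightarrow> 'a set \<Rightarrow> 'a \<Rightarrow> 'a \<Rightarrow> bool" where
  "reach E S x y \<longleftrightarrow> (\<lambda>a b. a \<in> S \<and> b \<in> S \<and> E a b)\<^sup>*\<^sup>* x y"

definition gcomp :: "('a \<Rightarrow> 'a \<Rightarrow> bool) \<Rightarrow> 'a set \<Rightarrow> 'a \<Rightarrow> 'a set" where
  "gcomp E S x = {y. reach E S x y}"

definition ncomp :: "('a \<Rightarrow> 'a \<Rightarrow> bool) \<Rightarrow> 'a set \<Rightarrow> nat" where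
  "ncomp E S = card (gcomp E S ` S)"

lemma reach_refl[simp]: "reach E S x x"
  by (simp add: reach_def)

lemma reach_trans: "reach E S x y \<Longrightarrow> reach E S y z \<Longrightarrow> reach E S x z"
  unfolding reach_def by (rule rtranclp_trans)

lemma reach_edge: "x \<in> S \<Longrightarrow> y \<in> S \<Longrightarrow> E x y \<Longrightarrow> reach E S x y"
  unfolding reach_def by (rule r_into_rtranclp) simp

lemma reach_sym: assumes "\<forall>x y. E x y \<longrightarrow> E y x" "reach E S x y" shows "reach E S y x"
  using assms(2) unfolding reach_def
proof (induction rule: rtranclp_induct)
  case base then show ?case by simp
next
  case (step y z)
  then have "(\<lambda>a b. a \<in> S \<and> b \<in> S \<and> E a b) z y" using assms(1) by auto
  then show ?case using step(3) by (rule converse_rtranclp_into_rtranclp)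
qed

lemma reach_mono: "reach E S x y \<Longrightarrow> S \<subseteq> T \<Longrightarrow> reach E T x y"
  unfolding reach_def
  by (erule rtranclp_mono[THEN predicate2D, rotated]) auto

lemma reach_in: "reach E S x y \<Longrightarrow> x \<in> S \<Longrightarrow> y \<in> S"
  unfolding reach_def by (induction rule: rtranclp_induct) auto

lemma reach_in2: "reach E S x y \<Longrightarrow> x \<noteq> y \<Longrightarrow> x \<in> S \<and> y \<in> S"
  unfolding reach_def by (induction rule: rtranclp_induct) auto

lemma connected_on_reach: "connected_on E S \<longleftrightarrow> S \<noteq> {} \<and> (\<forall>x\<in>S. \<forall>y\<in>S. reach E S x y)"
  unfolding connected_on_def reach_def by simp

lemma connected_hub:
  assumes sym: "\<forall>x y. E x y \<longrightarrow> E y x" and "h \<in> S" "\<forall>x\<in>S. reach E S x h"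
  shows "connected_on E S"
  unfolding connected_on_reach
proof (intro conjI ballI)
  show "S \<noteq> {}" using assms(2) by blast
  fix x y assume "x \<in> S" "y \<in> S"
  then have "reach E S x h" "reach E S y h" using assms(3) by auto
  then show "reach E S x y" using reach_trans reach_sym[OF sym] by metis
qed

lemma reach_avoid:
  assumes "reach E S y u" "\<forall>z. reach E S y z \<longrightarrow> z \<notin> C"
  shows "reach E (S - C) y u"
  using assms unfolding reach_def
proof (induction rule: rtranclp_induct)
  case base then show ?case by simp
next
  case (step z w)
  then have "z \<notin> C" "w \<notin> C" by (auto intro: rtranclp.intros)
  then show ?case using step by (auto intro: rtranclp.rtrancl_into_rtrancl)
qed

lemma first_hit:
  assumes "reach E S y t"
  shows "y = t \<or> (\<exists>u. reach E (S - {t}) y u \<and> u \<in> S \<and> E u t)"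
  using assms unfolding reach_def
proof (induction rule: converse_rtranclp_induct)
  case base then show ?case by simp
next
  case (step y y')
  show ?case
  proof (cases "y = t")
    case False
    show ?thesis
    proof (cases "y' = t")
      case True then show ?thesis using step False by auto
    next
      case False2: False
      then obtain u where u: "(\<lambda>a b. a \<in> S - {t} \<and> b \<in> S - {t} \<and> E a b)\<^sup>*\<^sup>* y' u" "u \<in> S" "E u t"
        using step by auto
      have "(\<lambda>a b. a \<in> S - {t} \<and> b \<in> S - {t} \<and> E a b) y y'" using step False False2 by auto
      then have "(\<lambda>a b. a \<in> S - {t} \<and> b \<in> S - {t} \<and> E a b)\<^sup>*\<^sup>* y u"
        using u(1) by (rule converse_rtranclp_into_rtranclp)
      then show ?thesis using u(2,3) by blast
    qed
  qed simp
qed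

lemma comp_sub: "x \<in> S \<Longrightarrow> gcomp E S x \<subseteq> S"
  unfolding gcomp_def using reach_in by (metis mem_Collect_eq subsetI)

lemma comp_self: "x \<in> gcomp E S x"
  unfolding gcomp_def by simp

lemma comp_eq:
  assumes sym: "\<forall>x y. E x y \<longrightarrow> E y x" and "y \<in> gcomp E S x"
  shows "gcomp E S y = gcomp E S x"
proof -
  have xy: "reach E S x y" using assms(2) by (simp add: gcomp_def)
  then have yx: "reach E S y x" by (rule reach_sym[OF sym])
  show ?thesis unfolding gcomp_def
  proof (intro set_eqI iffI; simp)
    fix z assume "reach E S y z" then show "reach E S x z" using xy reach_trans by metis
  next
    fix z assume "reach E S x z" then show "reach E S y z" using yx reach_trans by metis
  qed
qed

lemma reach_comp:
  assumes "reach E S x y" shows "reach E (gcomp E S x) x y"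
  using assms unfolding reach_def
proof (induction rule: rtranclp_induct)
  case base then show ?case by simp
next
  case (step y z)
  have "(\<lambda>a b. a \<in> S \<and> b \<in> S \<and> E a b)\<^sup>*\<^sup>* x z"
    using step(1,2) by (rule rtranclp.rtrancl_into_rtrancl)
  then have "y \<in> gcomp E S x" "z \<in> gcomp E S x" using step(1) unfolding gcomp_def reach_def by auto
  then show ?case using step(2,3) by (auto intro: rtranclp.rtrancl_into_rtrancl)
qed

lemma comp_connected:
  assumes sym: "\<forall>x y. E x y \<longrightarrow> E y x"
  shows "connected_on E (gcomp E S x)"
proof (rule connected_hub[OF sym, of x])
  show "x \<in> gcomp E S x" by (rule comp_self)
  show "\<forall>y\<in>gcomp E S x. reach E (gcomp E S x) y x"
  proof
    fix y assume "y \<in> gcomp E S x"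
    then have "reach E (gcomp E S x) x y" using reach_comp unfolding gcomp_def by fastforce
    then show "reach E (gcomp E S x) y x" using reach_sym[OF sym] by blast
  qed
qed

lemma connected_comp_eq:
  assumes "connected_on E S" "x \<in> S" shows "gcomp E S x = S"
proof
  show "gcomp E S x \<subseteq> S" using comp_sub assms(2) by metis
  show "S \<subseteq> gcomp E S x" using assms unfolding connected_on_reach gcomp_def by auto
qed

lemma comp_remove:
  assumes sym: "\<forall>x y. E x y \<longrightarrow> E y x" and "c \<in> S" "y \<in> S" "y \<notin> gcomp E S c"
  shows "gcomp E (S - gcomp E S c) y = gcomp E S y"
proof
  show "gcomp E (S - gcomp E S c) y \<subseteq> gcomp E S y"
  proof
    fix z assume "z \<in> gcomp E (S - gcomp E S c) y"
    then have "reach E (S - gcomp E S c) y z" by (simp add: gcomp_def)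
    then have "reach E S y z" using reach_mono by (metis Diff_subset)
    then show "z \<in> gcomp E S y" by (simp add: gcomp_def)
  qed
  show "gcomp E S y \<subseteq> gcomp E (S - gcomp E S c) y"
  proof
    fix z assume "z \<in> gcomp E S y"
    then have yz: "reach E S y z" by (simp add: gcomp_def)
    have "\<forall>w. reach E S y w \<longrightarrow> w \<notin> gcomp E S c"
    proof (intro allI impI)
      fix w assume yw: "reach E S y w"
      show "w \<notin> gcomp E S c"
      proof
        assume "w \<in> gcomp E S c"
        then have "reach E S c w" by (simp add: gcomp_def)
        moreover have "reach E S w y" using yw reach_sym[OF sym] by metis
        ultimately have "reach E S c y" using reach_trans by metis
        then show False using assms(4) by (simp add: gcomp_def)
      qed
    qed
    then have "reach E (S - gcomp E S c) y z" using yz reach_avoid by metis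
    then show "z \<in> gcomp E (S - gcomp E S c) y" by (simp add: gcomp_def)
  qed
qed

lemma comps_remove:
  assumes sym: "\<forall>x y. E x y \<longrightarrow> E y x" and "c \<in> S"
  shows "gcomp E (S - gcomp E S c) ` (S - gcomp E S c) = gcomp E S ` S - {gcomp E S c}"
proof
  show "gcomp E (S - gcomp E S c) ` (S - gcomp E S c) \<subseteq> gcomp E S ` S - {gcomp E S c}"
  proof
    fix C assume "C \<in> gcomp E (S - gcomp E S c) ` (S - gcomp E S c)"
    then obtain y where y: "y \<in> S" "y \<notin> gcomp E S c" "C = gcomp E (S - gcomp E S c) y" by auto
    then have C: "C = gcomp E S y" using comp_remove[OF sym assms(2)] by metis
    have "C \<noteq> gcomp E S c" using C y(2) comp_self by metis
    then show "C \<in> gcomp E S ` S - {gcomp E S c}" using C y(1) by blast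
  qed
next
  show "gcomp E S ` S - {gcomp E S c} \<subseteq> gcomp E (S - gcomp E S c) ` (S - gcomp E S c)"
  proof
    fix C assume "C \<in> gcomp E S ` S - {gcomp E S c}"
    then obtain y where y: "y \<in> S" "C = gcomp E S y" "C \<noteq> gcomp E S c" by auto
    then have "y \<notin> gcomp E S c" using comp_eq[OF sym] by metis
    then show "C \<in> gcomp E (S - gcomp E S c) ` (S - gcomp E S c)"
      using comp_remove[OF sym assms(2) y(1)] y by auto
  qed
qed

lemma connected_union:
  assumes sym: "\<forall>x y. E x y \<longrightarrow> E y x" and "connected_on E A" "connected_on E B"
    "a \<in> A" "b \<in> B" "E a b"
  shows "connected_on E (A \<union> B)"
proof (rule connected_hub[OF sym, of a])
  show "a \<in> A \<union> B" using assms by auto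
  show "\<forall>x\<in>A \<union> B. reach E (A \<union> B) x a"
  proof
    fix x assume "x \<in> A \<union> B"
    then show "reach E (A \<union> B) x a"
    proof
      assume "x \<in> A"
      then have "reach E A x a" using assms(2,4) unfolding connected_on_reach by blast
      then show ?thesis using reach_mono by (metis Un_upper1)
    next
      assume "x \<in> B"
      then have "reach E B x b" using assms(3,5) unfolding connected_on_reach by blast
      then have "reach E (A \<union> B) x b" using reach_mono by (metis Un_upper2)
      moreover have "reach E (A \<union> B) b a" using assms(4,5,6) sym by (intro reach_edge) auto
      ultimately show ?thesis using reach_trans by metis
    qed
  qed
qed



lemma comp_adj:
  assumes sym: "\<forall>x y. E x y \<longrightarrow> E y x" and A: "connected_on E A" "v \<in> A" "y \<in> A - {v}"
  shows "\<exists>u \<in> gcomp E (A - {v}) y. E u v"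
proof -
  have "reach E A y v" using A unfolding connected_on_reach by blast
  from first_hit[OF this] obtain u where "reach E (A - {v}) y u" "E u v" using A(3) by blast
  then show ?thesis unfolding gcomp_def by blast
qed

lemma comp_minus_connected:
  assumes sym: "\<forall>x y. E x y \<longrightarrow> E y x" and A: "connected_on E A" "v \<in> A" "y \<in> A - {v}"
  shows "connected_on E (A - gcomp E (A - {v}) y)"
proof -
  let ?C = "gcomp E (A - {v}) y"
  have Csub: "?C \<subseteq> A - {v}" using comp_sub A(3) by metis
  show ?thesis
  proof (rule connected_hub[OF sym, of v])
    show "v \<in> A - ?C" using Csub A(2) by blast
    show "\<forall>z\<in>A - ?C. reach E (A - ?C) z v"
    proof
      fix z assume z: "z \<in> A - ?C"
      show "reach E (A - ?C) z v"
      proof (cases "z = v")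
        case True then show ?thesis by simp
      next
        case False
        then have z2: "z \<in> A - {v}" "z \<notin> ?C" using z by auto
        obtain u where u: "u \<in> gcomp E (A - {v}) z" "E u v" using comp_adj[OF sym A(1,2) z2(1)] by blast
        have "gcomp E (A - {v} - ?C) z = gcomp E (A - {v}) z"
          using comp_remove[OF sym A(3) z2(1,2)] .
        then have "reach E (A - {v} - ?C) z u" using u(1) unfolding gcomp_def by blast
        then have r: "reach E (A - ?C) z u" using reach_mono by (metis Diff_mono Diff_subset order_refl)
        have "u \<in> A - {v} - ?C" using \<open>reach E (A - {v} - ?C) z u\<close> reach_in z2 by (metis DiffI)
        then have "reach E (A - ?C) u v" using u(2) \<open>v \<in> A - ?C\<close> by (intro reach_edge) auto
        then show ?thesis using r reach_trans by metis
      qed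
    qed
  qed
qed

lemma reach_exit:
  assumes "reach E S y d" "y \<in> C" "d \<notin> C"
  shows "\<exists>a b. a \<in> C \<and> b \<notin> C \<and> a \<in> S \<and> b \<in> S \<and> E a b"
  using assms unfolding reach_def
proof (induction rule: rtranclp_induct)
  case base then show ?case by simp
next
  case (step z w)
  show ?case
  proof (cases "z \<in> C")
    case True then show ?thesis using step by blast
  next
    case False then show ?thesis using step by blast
  qed
qed

lemma cpU: "conn_partition V E k P \<Longrightarrow> \<Union>P = V" unfolding conn_partition_def by simp
lemma cpD: "conn_partition V E k P \<Longrightarrow> X \<in> P \<Longrightarrow> Y \<in> P \<Longrightarrow> X \<noteq> Y \<Longrightarrow> X \<inter> Y = {}"
  unfolding conn_partition_def by simp
lemma cpN: "conn_partition V E k P \<Longrightarrow> X \<in> P \<Longrightarrow> X \<noteq> {}" unfolding conn_partition_def by simp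
lemma cpC: "conn_partition V E k P \<Longrightarrow> X \<in> P \<Longrightarrow> connected_on E X" unfolding conn_partition_def by simp
lemma cpF: "conn_partition V E k P \<Longrightarrow> finite P" unfolding conn_partition_def by simp
lemma cpK: "conn_partition V E k P \<Longrightarrow> card P = k" unfolding conn_partition_def by simp
lemma cpS: "conn_partition V E k P \<Longrightarrow> X \<in> P \<Longrightarrow> X \<subseteq> V" unfolding conn_partition_def by blast

lemma conn_partition_disj:
  "conn_partition V E k P \<Longrightarrow> A \<in> P \<Longrightarrow> B \<in> P \<Longrightarrow> x \<in> A \<Longrightarrow> x \<in> B \<Longrightarrow> A = B"
  unfolding conn_partition_def by blast

lemma ncomp_finite: "finite S \<Longrightarrow> finite (gcomp E S ` S)" by simp

lemma greedy:
  assumes sym: "\<forall>x y. E x y \<longrightarrow> E y x" and G: "simple_graph V E"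
    and Gv: "connected_on E (V - {v})" and k: "k \<ge> 2"
  shows "conn_partition V E k P \<Longrightarrow> A \<in> P \<Longrightarrow> v \<in> A \<Longrightarrow>
    \<exists>n Q. n \<le> ncomp E (A - {v}) \<and> (recomb_move V E k ^^ n) P Q \<and> conn_partition V E k Q \<and> {v} \<in> Q"
proof (induction "ncomp E (A - {v})" arbitrary: P A)
  case 0
  have finV: "finite V" using G unfolding simple_graph_def by blast
  have "A \<subseteq> V" using cpS[OF 0(2,3)] .
  then have "finite (A - {v})" using finV by (meson finite_Diff finite_subset)
  then have "gcomp E (A - {v}) ` (A - {v}) = {}" using 0(1) unfolding ncomp_def by simp
  then have "A = {v}" using 0 by blast
  then show ?case using 0 by (intro exI[of _ 0] exI[of _ P]) auto
next
  case (Suc m)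
  note P = Suc(3) and AP = Suc(4) and vA = Suc(5)
  have finV: "finite V" using G unfolding simple_graph_def by blast
  have AV: "A \<subseteq> V" using cpS[OF P AP] .
  have finA: "finite (A - {v})" using finV AV by (meson finite_Diff finite_subset)
  have Acon: "connected_on E A" using cpC[OF P AP] .
  have "gcomp E (A - {v}) ` (A - {v}) \<noteq> {}" using Suc(2) unfolding ncomp_def by (metis card.empty Zero_not_Suc)
  then have "A - {v} \<noteq> {}" by (metis image_empty)
  then obtain y where y: "y \<in> A - {v}" by blast
  define C where "C = gcomp E (A - {v}) y"
  have Csub: "C \<subseteq> A - {v}" unfolding C_def using comp_sub y by metis
  have yC: "y \<in> C" unfolding C_def by (rule comp_self)
  have "card P = k" using cpK[OF P] .
  then have "card P \<ge> 2" using k by simp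
  have "\<not> P \<subseteq> {A}"
  proof
    assume "P \<subseteq> {A}"
    then have "card P \<le> card {A}" by (intro card_mono) auto
    then show False using \<open>card P \<ge> 2\<close> by simp
  qed
  then obtain D0 where D0: "D0 \<in> P" "D0 \<noteq> A" by blast
  then obtain d0 where d0: "d0 \<in> D0" using cpN[OF P] by blast
  have d0A: "d0 \<notin> A" using conn_partition_disj[OF P D0(1) AP] d0 D0(2) by blast
  have "d0 \<in> V" using cpS[OF P D0(1)] d0 by blast
  then have d0V: "d0 \<in> V - {v}" using d0A vA by blast
  have "y \<in> V - {v}" using y AV by blast
  then have "reach E (V - {v}) y d0" using Gv d0V unfolding connected_on_reach by blast
  then obtain a b where ab: "a \<in> C" "b \<notin> C" "b \<in> V - {v}" "E a b"
    using reach_exit[of E "V - {v}" y d0 C] yC d0A Csub by blast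
  have bA: "b \<notin> A"
  proof
    assume "b \<in> A"
    then have "b \<in> A - {v}" using ab(3) by blast
    moreover have "a \<in> A - {v}" using ab(1) Csub by blast
    ultimately have "reach E (A - {v}) a b" using ab(4) by (intro reach_edge)
    moreover have "reach E (A - {v}) y a" using ab(1) unfolding C_def gcomp_def by blast
    ultimately have "reach E (A - {v}) y b" using reach_trans by metis
    then show False using ab(2) unfolding C_def gcomp_def by blast
  qed
  obtain D where D: "D \<in> P" "b \<in> D" using cpU[OF P] ab(3) by blast
  have DA: "D \<noteq> A" using D bA by blast
  have ADdisj: "A \<inter> D = {}" using cpD[OF P AP D(1)] DA by blast
  have Dcon: "connected_on E D" using cpC[OF P D(1)] .
  have Ccon: "connected_on E C" unfolding C_def by (rule comp_connected[OF sym])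
  define A' where "A' = A - C"
  define D' where "D' = D \<union> C"
  define P' where "P' = insert A' (insert D' (P - {A, D}))"
  have vA': "v \<in> A'" unfolding A'_def using vA Csub by blast
  have vD': "v \<notin> D'" unfolding D'_def using vA ADdisj Csub by blast
  have A'con: "connected_on E A'" unfolding A'_def C_def using comp_minus_connected[OF sym Acon vA y] .
  have D'con: "connected_on E D'" unfolding D'_def
    using connected_union[OF sym Dcon Ccon D(2) ab(1)] ab(4) sym by blast
  have A'notin: "A' \<notin> P - {A, D}"
  proof
    assume "A' \<in> P - {A, D}"
    then have "A' = A" using conn_partition_disj[OF P _ AP vA' vA] by blast
    then show False using \<open>A' \<in> P - {A, D}\<close> by blast
  qed
  have D'notin: "D' \<notin> P - {A, D}"
  proof
    assume "D' \<in> P - {A, D}"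
    moreover have "b \<in> D'" unfolding D'_def using D by blast
    ultimately have "D' = D" using conn_partition_disj[OF P _ D(1) _ D(2)] by blast
    then show False using \<open>D' \<in> P - {A, D}\<close> by blast
  qed
  have A'D': "A' \<noteq> D'" using vA' vD' by blast
  have unionAD: "A' \<union> D' = A \<union> D" unfolding A'_def D'_def using Csub by blast
  have P'part: "conn_partition V E k P'"
    unfolding conn_partition_def
  proof (intro conjI)
    show "\<Union>P' = V"
    proof -
      have "\<Union>P = \<Union>(P - {A, D}) \<union> (A \<union> D)" using AP D(1) by blast
      moreover have "\<Union>P' = \<Union>(P - {A, D}) \<union> (A' \<union> D')" unfolding P'_def by blast
      ultimately show ?thesis using unionAD cpU[OF P] by simp
    qed
    show "\<forall>X\<in>P'. \<forall>Y\<in>P'. X \<noteq> Y \<longrightarrow> X \<inter> Y = {}"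
    proof (intro ballI impI)
      fix X Y assume X: "X \<in> P'" and Y: "Y \<in> P'" and XY: "X \<noteq> Y"
      have other: "Z \<inter> A = {} \<and> Z \<inter> D = {}" if "Z \<in> P - {A, D}" for Z
        using that cpD[OF P] AP D(1) by blast
      have AD'disj: "A' \<inter> D' = {}" unfolding A'_def D'_def using ADdisj Csub by blast
      have oA': "Z \<inter> A' = {} \<and> Z \<inter> D' = {}" if "Z \<in> P - {A, D}" for Z
        using other[OF that] Csub unfolding A'_def D'_def by blast
      show "X \<inter> Y = {}"
      proof (cases "X \<in> P - {A, D} \<and> Y \<in> P - {A, D}")
        case True then show ?thesis using cpD[OF P] XY by blast
      next
        case False
        then show ?thesis using X Y XY AD'disj oA' unfolding P'_def by blast
      qed
    qed
    show "\<forall>X\<in>P'. X \<noteq> {} \<and> connected_on E X"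
      using cpC[OF P] cpN[OF P] A'con D'con unfolding P'_def connected_on_def by blast
    show "finite P'" using cpF[OF P] unfolding P'_def by blast
    show "card P' = k"
    proof -
      have fin: "finite (P - {A, D})" using cpF[OF P] by blast
      have "card (P - {A, D}) = card P - 2"
        using AP D(1) DA fin by (simp add: card_Diff_subset)
      then have "card (P - {A, D}) = k - 2" using cpK[OF P] by simp
      moreover have "card P' = card (P - {A, D}) + 2"
        unfolding P'_def using fin A'notin D'notin A'D' by simp
      ultimately show ?thesis using k by simp
    qed
  qed
  have move: "recomb_move V E k P P'"
    unfolding recomb_move_def
  proof (intro conjI)
    show "conn_partition V E k P" by (rule P)
    show "conn_partition V E k P'" by (rule P'part)
    have "A \<noteq> A'" using yC y unfolding A'_def by blast
    moreover have "A \<noteq> D'" using vA vD' by blast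
    ultimately have "A \<notin> P'" unfolding P'_def by blast
    then show "P \<noteq> P'" using AP by blast
    have eqP: "P - {A, D} = P' - {A', D'}" unfolding P'_def using A'notin D'notin by blast
    show "\<exists>A\<in>P. \<exists>B\<in>P. \<exists>C\<in>P'. \<exists>D\<in>P'. A \<noteq> B \<and> C \<noteq> D \<and> A \<union> B = C \<union> D \<and> P - {A, B} = P' - {C, D}"
      apply (rule bexI[where x=A], rule bexI[where x=D], rule bexI[where x=A'], rule bexI[where x=D'])
      using AP D(1) DA A'D' unionAD eqP unfolding P'_def by auto
  qed
  have "A' - {v} = (A - {v}) - gcomp E (A - {v}) y" unfolding A'_def C_def by blast
  then have "gcomp E (A' - {v}) ` (A' - {v}) = gcomp E (A - {v}) ` (A - {v}) - {C}"
    using comps_remove[OF sym y] unfolding C_def by simp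
  moreover have "C \<in> gcomp E (A - {v}) ` (A - {v})" unfolding C_def using y by blast
  ultimately have "ncomp E (A' - {v}) = m" using Suc(2) finA unfolding ncomp_def by simp
  moreover have "A' \<in> P'" unfolding P'_def by blast
  ultimately obtain n Q where nQ: "n \<le> m" "(recomb_move V E k ^^ n) P' Q" "conn_partition V E k Q" "{v} \<in> Q"
    using Suc(1)[OF _ P'part _ vA'] by metis
  show ?case
    apply (rule exI[of _ "Suc n"], rule exI[of _ Q])
    using nQ move Suc(2) relpowp_Suc_I2[of "recomb_move V E k" P P' n Q] by simp
qed



lemma noncut_comp:
  assumes sym: "\<forall>x y. E x y \<longrightarrow> E y x" and fin: "finite M" and con: "connected_on E M"
    and two: "2 \<le> card M"
  shows "\<exists>c\<in>M. \<exists>x\<in>M - {c}. \<forall>w\<in>gcomp E (M - {c}) x. connected_on E (M - {w})"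
proof -
  let ?P = "\<lambda>q. fst q \<in> M \<and> snd q \<in> M - {fst q}"
  let ?m = "\<lambda>q. card (gcomp E (M - {fst q}) (snd q))"
  have "\<exists>c x. c \<in> M \<and> x \<in> M \<and> c \<noteq> x"
  proof (rule ccontr)
    assume "\<not> (\<exists>c x. c \<in> M \<and> x \<in> M \<and> c \<noteq> x)"
    then have "\<forall>c\<in>M. \<forall>x\<in>M. c = x" by blast
    then have "card M \<le> 1" using card_le_Suc0_iff_eq[OF fin] by simp
    then show False using two by simp
  qed
  then obtain c0 x0 where "?P (c0, x0)" by auto
  from ex_has_least_nat[of ?P "(c0, x0)" ?m, OF this]
  obtain p where p: "?P p" and pmin: "\<forall>q. ?P q \<longrightarrow> ?m p \<le> ?m q" by blast
  define c where "c = fst p"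
  define x where "x = snd p"
  define K where "K = gcomp E (M - {c}) x"
  have cM: "c \<in> M" and xM: "x \<in> M - {c}" using p unfolding c_def x_def by auto
  have Kmin: "\<And>c' x'. c' \<in> M \<Longrightarrow> x' \<in> M - {c'} \<Longrightarrow> card K \<le> card (gcomp E (M - {c'}) x')"
    using pmin unfolding K_def c_def x_def by fastforce
  have Ksub: "K \<subseteq> M - {c}" unfolding K_def using comp_sub xM by metis
  have finK: "finite K" using Ksub fin by (meson finite_Diff finite_subset)
  have "\<forall>w\<in>K. connected_on E (M - {w})"
  proof
    fix w assume wK: "w \<in> K"
    then have wM: "w \<in> M" and wc: "w \<noteq> c" using Ksub by auto
    show "connected_on E (M - {w})"
    proof (rule ccontr)
      assume ncon: "\<not> connected_on E (M - {w})"
      have "M - {w} \<noteq> {}"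
      proof
        assume "M - {w} = {}"
        then have "M \<subseteq> {w}" by blast
        then have "card M \<le> card {w}" by (intro card_mono) auto
        then show False using two by simp
      qed
      then obtain p q where pq: "p \<in> M - {w}" "q \<in> M - {w}" "\<not> reach E (M - {w}) p q"
        using ncon unfolding connected_on_reach by blast
      have cMw: "c \<in> M - {w}" using cM wc by blast
      obtain z where z: "z \<in> M - {w}" "\<not> reach E (M - {w}) z c"
      proof -
        have "\<not> (reach E (M - {w}) p c \<and> reach E (M - {w}) q c)"
        proof
          assume "reach E (M - {w}) p c \<and> reach E (M - {w}) q c"
          then have "reach E (M - {w}) p c" "reach E (M - {w}) c q"
            using reach_sym[OF sym] by blast+
          then have "reach E (M - {w}) p q" using reach_trans by metis
          then show False using pq(3) by blast
        qed
        then show ?thesis using that pq(1,2) by blast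
      qed
      have zK: "z \<in> K"
      proof (rule ccontr)
        assume znK: "z \<notin> K"
        have "reach E M z c" using con z(1) cM unfolding connected_on_reach by blast
        moreover have "z \<noteq> c" using z(2) by (metis reach_refl)
        ultimately obtain u where u: "reach E (M - {c}) z u" "u \<in> M" "E u c"
          using first_hit by metis
        have avoid: "\<forall>y. reach E (M - {c}) z y \<longrightarrow> y \<notin> {w}"
        proof (intro allI impI)
          fix y assume zy: "reach E (M - {c}) z y"
          show "y \<notin> {w}"
          proof
            assume "y \<in> {w}"
            then have "reach E (M - {c}) z w" using zy by simp
            then have "reach E (M - {c}) w z" using reach_sym[OF sym] by metis
            moreover have "reach E (M - {c}) x w" using wK unfolding K_def gcomp_def by simp
            ultimately have "reach E (M - {c}) x z" using reach_trans by metis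
            then show False using znK unfolding K_def gcomp_def by simp
          qed
        qed
        have "reach E (M - {c} - {w}) z u" using reach_avoid[OF u(1) avoid] .
        moreover have "M - {c} - {w} \<subseteq> M - {w}" by blast
        ultimately have zu: "reach E (M - {w}) z u" using reach_mono by metis
        have "u \<in> M - {c} - {w}"
          using reach_in[OF \<open>reach E (M - {c} - {w}) z u\<close>] z(1) \<open>z \<noteq> c\<close> by blast
        then have "reach E (M - {w}) u c" using u(3) cMw by (intro reach_edge) auto
        then have "reach E (M - {w}) z c" using zu reach_trans by metis
        then show False using z(2) by simp
      qed
      define K2 where "K2 = gcomp E (M - {w}) z"
      have K2sub: "K2 \<subseteq> K - {w}"
      proof
        fix y assume "y \<in> K2"
        then have zy: "reach E (M - {w}) z y" unfolding K2_def gcomp_def by simp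
        have avoid: "\<forall>y'. reach E (M - {w}) z y' \<longrightarrow> y' \<notin> {c}" using z(2) by auto
        have "reach E (M - {w} - {c}) z y" using reach_avoid[OF zy avoid] .
        moreover have "M - {w} - {c} \<subseteq> M - {c}" by blast
        ultimately have "reach E (M - {c}) z y" using reach_mono by metis
        moreover have "reach E (M - {c}) x z" using zK unfolding K_def gcomp_def by simp
        ultimately have "reach E (M - {c}) x y" using reach_trans by metis
        then have "y \<in> K" unfolding K_def gcomp_def by simp
        moreover have "y \<in> M - {w}" using reach_in[OF zy] z(1) by blast
        ultimately show "y \<in> K - {w}" by blast
      qed
      have "card K2 < card K"
      proof -
        have "K2 \<subset> K" using K2sub wK by blast
        then show ?thesis using finK by (rule psubset_card_mono[rotated])
      qed
      moreover have "card K \<le> card K2" unfolding K2_def using Kmin[OF wM z(1)] .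
      ultimately show False by simp
    qed
  qed
  then show ?thesis using cM xM unfolding K_def by blast
qed

lemma card_image_factor:
  assumes fin: "finite T" and fact: "\<And>y y'. y \<in> T \<Longrightarrow> y' \<in> T \<Longrightarrow> g y = g y' \<Longrightarrow> f y = f y'"
  shows "card (f ` T) \<le> card (g ` T)"
proof -
  define h where "h C = f (SOME y. y \<in> T \<and> g y = C)" for C
  have "f ` T \<subseteq> h ` (g ` T)"
  proof
    fix z assume "z \<in> f ` T"
    then obtain y where y: "y \<in> T" "z = f y" by blast
    have "\<exists>y0. y0 \<in> T \<and> g y0 = g y" using y(1) by blast
    then have "(SOME y0. y0 \<in> T \<and> g y0 = g y) \<in> T \<and> g (SOME y0. y0 \<in> T \<and> g y0 = g y) = g y"
      by (rule someI_ex)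
    then have hg: "h (g y) = f y" unfolding h_def using fact y(1) by metis
    have "g y \<in> g ` T" using y(1) by blast
    then have "h (g y) \<in> h ` (g ` T)" by blast
    then show "z \<in> h ` (g ` T)" using hg y(2) by simp
  qed
  then have "card (f ` T) \<le> card (h ` (g ` T))" using fin by (intro card_mono) auto
  also have "\<dots> \<le> card (g ` T)" using fin by (intro card_image_le) auto
  finally show ?thesis .
qed

lemma ncomp_insert:
  assumes sym: "\<forall>x y. E x y \<longrightarrow> E y x" and fin: "finite T" and wT: "w \<notin> T"
  shows "ncomp E (insert w T) \<le> ncomp E T + (if \<exists>u\<in>T. E w u then 0 else 1)"
proof -
  let ?f = "gcomp E (insert w T)" and ?g = "gcomp E T"
  have img: "?f ` (insert w T) = insert (?f w) (?f ` T)" by simp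
  have le: "card (?f ` T) \<le> card (?g ` T)"
  proof (rule card_image_factor[OF fin])
    fix y y' assume y: "y \<in> T" "y' \<in> T" "?g y = ?g y'"
    then have "y' \<in> ?g y" using comp_self by metis
    then have "reach E T y y'" unfolding gcomp_def by simp
    then have "reach E (insert w T) y y'" using reach_mono by (metis subset_insertI)
    then have "y' \<in> ?f y" unfolding gcomp_def by simp
    then show "?f y = ?f y'" using comp_eq[OF sym] by metis
  qed
  show ?thesis
  proof (cases "\<exists>u\<in>T. E w u")
    case True
    then obtain u where u: "u \<in> T" "E w u" by blast
    then have "reach E (insert w T) w u" by (intro reach_edge) auto
    then have "u \<in> ?f w" unfolding gcomp_def by simp
    then have "?f u = ?f w" using comp_eq[OF sym] by metis
    then have "?f w \<in> ?f ` T" using u(1) by (metis image_eqI)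
    then have "?f ` (insert w T) = ?f ` T" using img by (simp add: insert_absorb)
    then show ?thesis using le True unfolding ncomp_def by simp
  next
    case False
    have "card (?f ` (insert w T)) \<le> card (?f ` T) + 1"
      unfolding img using card_insert_le_m1 fin
      by (metis Suc_eq_plus1 card_insert_if finite_imageI le_SucI order_refl)
    then show ?thesis using le False unfolding ncomp_def by simp
  qed
qed

lemma ncomp_connected:
  assumes "connected_on E S" shows "ncomp E S = 1"
proof -
  have "gcomp E S ` S = {S}" using connected_comp_eq[OF assms] assms unfolding connected_on_def by auto
  then show ?thesis unfolding ncomp_def by simp
qed

lemma ncomp_pos:
  assumes "finite S" "S \<noteq> {}" shows "1 \<le> ncomp E S"
  using assms unfolding ncomp_def by (simp add: Suc_leI card_gt_0_iff)

lemma ncomp_empty[simp]: "ncomp E {} = 0" unfolding ncomp_def by simp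



lemma has_neighbor:
  assumes irr: "\<forall>x. \<not> E x x" and con: "connected_on E M" and wM: "w \<in> M" and yM: "y \<in> M" "y \<noteq> w"
  shows "\<exists>u\<in>M. u \<noteq> w \<and> E w u"
proof -
  have "reach E M w y" using con wM yM unfolding connected_on_reach by blast
  then have "(\<lambda>a b. a \<in> M \<and> b \<in> M \<and> E a b)\<^sup>*\<^sup>* w y" unfolding reach_def .
  then show ?thesis
  proof (cases rule: converse_rtranclpE)
    case base then show ?thesis using yM by simp
  next
    case (step u) then show ?thesis using irr by metis
  qed
qed

lemma sum_ncomp:
  assumes sym: "\<forall>x y. E x y \<longrightarrow> E y x" and irr: "\<forall>x. \<not> E x x"
  shows "finite M \<Longrightarrow> card M = n \<Longrightarrow> connected_on E M \<Longrightarrow>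
    (\<Sum>v\<in>M. int (ncomp E (M - {v})) - 1) \<le> int n - 2"
proof (induction n arbitrary: M)
  case 0
  then have "M = {}" by simp
  then show ?case using 0 unfolding connected_on_def by simp
next
  case (Suc n)
  show ?case
  proof (cases "n = 0")
    case True
    then obtain x where "M = {x}" using Suc(3) card_1_singletonE by (metis One_nat_def)
    then show ?thesis using True by simp
  next
    case False
    then have two: "2 \<le> card M" using Suc(3) by simp
    obtain c x where cx: "c \<in> M" "x \<in> M - {c}" and nc: "\<forall>w\<in>gcomp E (M - {c}) x. connected_on E (M - {w})"
      using noncut_comp[OF sym Suc(2) Suc(4) two] by blast
    define w where "w = x"
    have wM: "w \<in> M" using cx unfolding w_def by blast
    have M'con: "connected_on E (M - {w})" using nc comp_self unfolding w_def by metis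
    define M' where "M' = M - {w}"
    have finM': "finite M'" using Suc(2) unfolding M'_def by simp
    have cardM': "card M' = n" using Suc(3) wM unfolding M'_def by simp
    have IH: "(\<Sum>v\<in>M'. int (ncomp E (M' - {v})) - 1) \<le> int n - 2"
      using Suc(1)[OF finM' cardM'] M'con unfolding M'_def by blast
    have "M' \<noteq> {}" using M'con unfolding M'_def connected_on_def by blast
    then obtain y where y: "y \<in> M'" by blast
    obtain u0 where u0: "u0 \<in> M" "u0 \<noteq> w" "E w u0"
      using has_neighbor[OF irr Suc(4) wM, of y] y unfolding M'_def by blast
    have u0M': "u0 \<in> M'" using u0 unfolding M'_def by blast
    define ind where "ind v = (if \<exists>u\<in>M' - {v}. E w u then 0 else 1::int)" for v
    have step: "int (ncomp E (M - {v})) \<le> int (ncomp E (M' - {v})) + ind v" if vM': "v \<in> M'" for v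
    proof -
      have eq: "M - {v} = insert w (M' - {v})" using vM' wM unfolding M'_def by blast
      have "ncomp E (insert w (M' - {v})) \<le> ncomp E (M' - {v}) + (if \<exists>u\<in>M' - {v}. E w u then 0 else 1)"
        by (rule ncomp_insert[OF sym]) (use finM' in \<open>auto simp: M'_def\<close>)
      then show ?thesis unfolding eq ind_def by (simp split: if_splits)
    qed
    have indle: "ind v \<le> (if v = u0 then 1 else 0)" if "v \<in> M'" for v
      unfolding ind_def using u0 u0M' by auto
    have "(\<Sum>v\<in>M'. ind v) \<le> (\<Sum>v\<in>M'. (if v = u0 then 1 else 0::int))"
      by (rule sum_mono) (rule indle)
    also have "\<dots> = 1" using u0M' finM' by simp
    finally have sumind: "(\<Sum>v\<in>M'. ind v) \<le> 1" .
    have "(\<Sum>v\<in>M. int (ncomp E (M - {v})) - 1)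
        = (int (ncomp E (M - {w})) - 1) + (\<Sum>v\<in>M'. int (ncomp E (M - {v})) - 1)"
      unfolding M'_def using Suc(2) wM by (simp add: sum.remove)
    also have "int (ncomp E (M - {w})) - 1 = 0" using ncomp_connected[OF M'con] by simp
    also have "(\<Sum>v\<in>M'. int (ncomp E (M - {v})) - 1) \<le> (\<Sum>v\<in>M'. (int (ncomp E (M' - {v})) - 1) + ind v)"
      by (rule sum_mono) (use step in force)
    also have "\<dots> = (\<Sum>v\<in>M'. int (ncomp E (M' - {v})) - 1) + (\<Sum>v\<in>M'. ind v)"
      by (rule sum.distrib)
    finally show ?thesis using IH sumind by simp
  qed
qed

definition beta :: "('a \<Rightarrow> 'a \<Rightarrow> bool) \<Rightarrow> 'a set \<Rightarrow> 'a set" where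
  "beta E S = {v\<in>S. 3 \<le> ncomp E (gcomp E S v - {v})}"

lemma beta_connected:
  assumes sym: "\<forall>x y. E x y \<longrightarrow> E y x" and irr: "\<forall>x. \<not> E x x"
    and fin: "finite S" and con: "connected_on E S"
  shows "2 * card (beta E S) < card S"
proof -
  have bS: "beta E S = {v\<in>S. 3 \<le> ncomp E (S - {v})}"
    unfolding beta_def using connected_comp_eq[OF con] by auto
  have ne: "S \<noteq> {}" using con unfolding connected_on_def by blast
  show ?thesis
  proof (cases "card S = 1")
    case True
    then obtain x where "S = {x}" using card_1_singletonE by metis
    then show ?thesis unfolding bS by simp
  next
    case False
    have "0 < card S" using ne fin by (simp add: card_gt_0_iff)
    then have two: "card S \<ge> 2" using False by linarith
    have pos: "1 \<le> ncomp E (S - {v})" if "v \<in> S" for v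
    proof (rule ncomp_pos)
      show "finite (S - {v})" using fin by simp
      show "S - {v} \<noteq> {}"
      proof
        assume "S - {v} = {}"
        then have "S \<subseteq> {v}" by blast
        then have "card S \<le> card {v}" by (intro card_mono) auto
        then show False using two by simp
      qed
    qed
    have "int (2 * card (beta E S)) = (\<Sum>v\<in>S. if v \<in> beta E S then 2 else 0::int)"
      using fin by (simp add: sum.If_cases bS Int_def)
    also have "\<dots> \<le> (\<Sum>v\<in>S. int (ncomp E (S - {v})) - 1)"
    proof (rule sum_mono)
      fix v assume "v \<in> S"
      then show "(if v \<in> beta E S then 2 else 0::int) \<le> int (ncomp E (S - {v})) - 1"
        using pos[of v] unfolding bS by auto
    qed
    also have "\<dots> \<le> int (card S) - 2" using sum_ncomp[OF sym irr fin refl con] .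
    finally show ?thesis by simp
  qed
qed

lemma beta_count:
  assumes sym: "\<forall>x y. E x y \<longrightarrow> E y x" and irr: "\<forall>x. \<not> E x x"
  shows "finite S \<Longrightarrow> S \<noteq> {} \<Longrightarrow> 2 * card (beta E S) < card S"
proof (induction "card S" arbitrary: S rule: less_induct)
  case less
  obtain x where xS: "x \<in> S" using less(3) by blast
  define M where "M = gcomp E S x"
  have MS: "M \<subseteq> S" unfolding M_def using comp_sub xS by metis
  have Mcon: "connected_on E M" unfolding M_def by (rule comp_connected[OF sym])
  show ?case
  proof (cases "M = S")
    case True then show ?thesis using beta_connected[OF sym irr less(2)] Mcon by simp
  next
    case False
    define R where "R = S - M"
    have finM: "finite M" using MS less(2) by (rule finite_subset)
    have finR: "finite R" using less(2) unfolding R_def by simp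
    have Rne: "R \<noteq> {}" using False MS unfolding R_def by blast
    have cardS: "card S = card M + card R"
      using MS less(2) unfolding R_def by (metis card_Diff_subset finM card_mono le_add_diff_inverse)
    have Mne: "M \<noteq> {}" using comp_self[of x E S] unfolding M_def by blast
    have "card M < card S" using False MS less(2) by (meson psubsetI psubset_card_mono)
    then have bM: "2 * card (beta E M) < card M" using less(1)[OF _ finM Mne] by blast
    have "card R < card S" using cardS Mne finM by (simp add: card_gt_0_iff)
    then have bR: "2 * card (beta E R) < card R" using less(1)[OF _ finR Rne] by blast
    have sub: "beta E S \<subseteq> beta E M \<union> beta E R"
    proof
      fix v assume v: "v \<in> beta E S"
      then have vS: "v \<in> S" unfolding beta_def by blast
      show "v \<in> beta E M \<union> beta E R"
      proof (cases "v \<in> M")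
        case True
        have "gcomp E S v = M" unfolding M_def using comp_eq[OF sym] True unfolding M_def by metis
        moreover have "gcomp E M v = M" using connected_comp_eq[OF Mcon True] .
        ultimately show ?thesis using v True unfolding beta_def by auto
      next
        case False
        have "gcomp E R v = gcomp E S v" unfolding R_def M_def
          using comp_remove[OF sym xS vS] False unfolding M_def by blast
        then show ?thesis using v False vS unfolding beta_def R_def by auto
      qed
    qed
    have "card (beta E S) \<le> card (beta E M \<union> beta E R)"
      using sub finM finR by (intro card_mono) (auto simp: beta_def)
    also have "\<dots> \<le> card (beta E M) + card (beta E R)" by (rule card_Un_le)
    finally show ?thesis using bM bR cardS by simp
  qed
qed



lemma path_fun_ex:
  assumes "reach E S a b"
  shows "\<exists>n f. f 0 = a \<and> f n = b \<and> (\<forall>i<n. f i \<in> S \<and> f (Suc i) \<in> S \<and> E (f i) (f (Suc i)))"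
proof -
  obtain n where "((\<lambda>a b. a \<in> S \<and> b \<in> S \<and> E a b) ^^ n) a b"
    using assms unfolding reach_def using rtranclp_imp_relpowp by metis
  then show ?thesis unfolding relpowp_fun_conv by blast
qed

lemma path_inj_ex:
  assumes "reach E S a b"
  shows "\<exists>n f. f 0 = a \<and> f n = b \<and> (\<forall>i<n. f i \<in> S \<and> f (Suc i) \<in> S \<and> E (f i) (f (Suc i)))
     \<and> inj_on f {0..n}"
proof -
  let ?Q = "\<lambda>n. \<exists>f. f 0 = a \<and> f n = b \<and> (\<forall>i<n. f i \<in> S \<and> f (Suc i) \<in> S \<and> E (f i) (f (Suc i)))"
  obtain n0 where "?Q n0" using path_fun_ex[OF assms] by blast
  from ex_has_least_nat[of ?Q n0 id, OF this]
  obtain n where Qn: "?Q n" and nmin: "\<forall>m. ?Q m \<longrightarrow> n \<le> m" by auto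
  then obtain f where f: "f 0 = a" "f n = b" "\<forall>i<n. f i \<in> S \<and> f (Suc i) \<in> S \<and> E (f i) (f (Suc i))"
    by blast
  have "inj_on f {0..n}"
  proof (rule ccontr)
    assume "\<not> inj_on f {0..n}"
    then obtain i j where ij: "i \<le> n" "j \<le> n" "i \<noteq> j" "f i = f j"
      unfolding inj_on_def by auto
    obtain i j where ij: "i < j" "j \<le> n" "f i = f j"
    proof (cases "i < j")
      case True then show ?thesis using that ij by blast
    next
      case False then show ?thesis using that[of j i] ij by auto
    qed
    define d where "d = j - i"
    define g where "g t = (if t \<le> i then f t else f (t + d))" for t
    have "?Q (n - d)"
    proof (intro exI conjI)
      show "g 0 = a" unfolding g_def using f by simp
      show "g (n - d) = b"
      proof (cases "n - d \<le> i")
        case True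
        then have "n = j" using ij unfolding d_def by linarith
        then show ?thesis unfolding g_def using True ij f unfolding d_def by auto
      next
        case False
        then show ?thesis unfolding g_def using ij f unfolding d_def by auto
      qed
      show "\<forall>t<n - d. g t \<in> S \<and> g (Suc t) \<in> S \<and> E (g t) (g (Suc t))"
      proof (intro allI impI)
        fix t assume t: "t < n - d"
        show "g t \<in> S \<and> g (Suc t) \<in> S \<and> E (g t) (g (Suc t))"
        proof (cases "t < i")
          case True
          then show ?thesis unfolding g_def using f(3) ij by auto
        next
          case False
          show ?thesis
          proof (cases "t = i")
            case True
            have "j < n" using t True ij unfolding d_def by linarith
            then have "f j \<in> S \<and> f (Suc j) \<in> S \<and> E (f j) (f (Suc j))" using f(3) by blast
            moreover have "g t = f j" unfolding g_def using True ij by simp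
            moreover have "g (Suc t) = f (Suc j)" unfolding g_def d_def using True ij by simp
            ultimately show ?thesis by simp
          next
            case False2: False
            then have "t > i" using False by simp
            have "t + d < n" using t ij unfolding d_def by linarith
            then have "f (t + d) \<in> S \<and> f (Suc (t + d)) \<in> S \<and> E (f (t + d)) (f (Suc (t + d)))" using f(3) by blast
            moreover have "g t = f (t + d)" unfolding g_def using \<open>t > i\<close> by simp
            moreover have "g (Suc t) = f (Suc (t + d))" unfolding g_def using \<open>t > i\<close> by simp
            ultimately show ?thesis by simp
          qed
        qed
      qed
    qed
    then have "n \<le> n - d" using nmin by blast
    moreover have "d > 0" unfolding d_def using ij by simp
    moreover have "d \<le> n" unfolding d_def using ij by simp
    ultimately show False by linarith
  qed
  then show ?thesis using f by blast
qed

lemma path_down: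
  assumes sym: "\<forall>x y. E x y \<longrightarrow> E y x" and e: "\<forall>t<n. E (f t) (f (Suc t))"
  shows "i \<le> n \<Longrightarrow> (\<forall>t\<le>i. f t \<in> X) \<Longrightarrow> reach E X (f i) (f 0)"
proof (induction i)
  case 0 then show ?case by simp
next
  case (Suc i)
  then have "reach E X (f i) (f 0)" by simp
  moreover have "reach E X (f (Suc i)) (f i)"
    using Suc(2,3) e sym by (intro reach_edge) auto
  ultimately show ?case using reach_trans by metis
qed

lemma path_up:
  assumes e: "\<forall>t<n. E (f t) (f (Suc t))"
  shows "d \<le> n \<Longrightarrow> (\<forall>t. n - d \<le> t \<and> t \<le> n \<longrightarrow> f t \<in> X) \<Longrightarrow> reach E X (f (n - d)) (f n)"
proof (induction d)
  case 0 then show ?case by simp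
next
  case (Suc d)
  have "\<forall>t. n - d \<le> t \<and> t \<le> n \<longrightarrow> f t \<in> X" using Suc(3) by auto
  then have "reach E X (f (n - d)) (f n)" using Suc(1,2) by simp
  moreover have "reach E X (f (n - Suc d)) (f (n - d))"
  proof -
    have "Suc (n - Suc d) = n - d" using Suc(2) by simp
    moreover have "n - Suc d < n" using Suc(2) by simp
    moreover have "f (n - Suc d) \<in> X" using Suc(3) by auto
    moreover have "f (n - d) \<in> X" using Suc(3) by auto
    moreover have "E (f (n - Suc d)) (f (Suc (n - Suc d)))" using e \<open>n - Suc d < n\<close> by blast
    ultimately show ?thesis by (intro reach_edge) auto
  qed
  ultimately show ?case using reach_trans by metis
qed

lemma connected_single: "connected_on E {x}"
  unfolding connected_on_reach by simp

lemma nonsep_single_edge: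
  assumes sym: "\<forall>x y. E x y \<longrightarrow> E y x" and "v \<in> V" "u \<in> V" "E v u" "u \<noteq> v"
  shows "nonseparable V E {v, u}"
  unfolding nonseparable_def
proof (intro conjI ballI impI)
  show "{v, u} \<subseteq> V" using assms by blast
  have "E u v" using sym assms(4) by blast
  then have "reach E {v, u} u v" by (intro reach_edge) auto
  then show "connected_on E {v, u}"
    using connected_hub[OF sym, of v "{v, u}"] by simp
  fix x assume "x \<in> {v, u}" "{v, u} - {x} \<noteq> {}"
  then have "{v, u} - {x} = {v} \<or> {v, u} - {x} = {u}" using assms by blast
  then show "connected_on E ({v, u} - {x})"
    using connected_single by metis
qed

lemma nonsep_remove: "nonseparable V E B \<Longrightarrow> x \<in> B \<Longrightarrow> B - {x} \<noteq> {} \<Longrightarrow> connected_on E (B - {x})"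
  unfolding nonseparable_def by blast
lemma nonsep_conn: "nonseparable V E B \<Longrightarrow> connected_on E B"
  unfolding nonseparable_def by blast
lemma nonsep_sub: "nonseparable V E B \<Longrightarrow> B \<subseteq> V"
  unfolding nonseparable_def by blast

lemma block_vertex_if:
  assumes sym: "\<forall>x y. E x y \<longrightarrow> E y x" and irr: "\<forall>x. \<not> E x x"
    and con: "connected_on E V" and vV: "v \<in> V" and Vv: "connected_on E (V - {v})"
  shows "block_vertex V E v"
proof -
  have "\<not> cut_vertex V E v"
  proof
    assume "cut_vertex V E v"
    then obtain B1 B2 where B: "is_block V E B1" "is_block V E B2" "B1 \<noteq> B2" "v \<in> B1" "v \<in> B2"
      unfolding cut_vertex_def by blast
    have ns1: "nonseparable V E B1" and max1: "\<And>C. nonseparable V E C \<Longrightarrow> B1 \<subseteq> C \<Longrightarrow> C = B1"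
      using B(1) unfolding is_block_def by blast+
    have ns2: "nonseparable V E B2" and max2: "\<And>C. nonseparable V E C \<Longrightarrow> B2 \<subseteq> C \<Longrightarrow> C = B2"
      using B(2) unfolding is_block_def by blast+
    have B1V: "B1 \<subseteq> V" and B2V: "B2 \<subseteq> V" using nonsep_sub[OF ns1] nonsep_sub[OF ns2] by blast+
    obtain y where y: "y \<in> V - {v}" using Vv unfolding connected_on_def by blast
    have "reach E V v y" using con vV y unfolding connected_on_reach by blast
    then have "(\<lambda>a b. a \<in> V \<and> b \<in> V \<and> E a b)\<^sup>*\<^sup>* v y" unfolding reach_def .
    then obtain u where u: "u \<in> V" "E v u"
    proof (cases rule: converse_rtranclpE)
      case base then show ?thesis using y by simp
    next
      case (step u) then show ?thesis using that by blast
    qed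
    have uv: "u \<noteq> v" using u irr by metis
    have nsvu: "nonseparable V E {v, u}" using nonsep_single_edge[OF sym vV u(1) u(2) uv] .
    have B1ne: "B1 \<noteq> {v}"
    proof
      assume "B1 = {v}"
      then have "{v, u} = B1" using max1[OF nsvu] by blast
      then show False using \<open>B1 = {v}\<close> uv by blast
    qed
    then obtain a where a: "a \<in> B1" "a \<noteq> v" using B(4) by blast
    have "\<not> B2 \<subseteq> B1" using max2[OF ns1] B(3) by blast
    then obtain b where b: "b \<in> B2" "b \<notin> B1" by blast
    have bv: "b \<noteq> v" using b B(4) by blast
    have "reach E (V - {v}) a b" using Vv a b B1V B2V bv unfolding connected_on_reach by blast
    then obtain n f where f: "f 0 = a" "f n = b"
        "\<forall>i<n. f i \<in> V - {v} \<and> f (Suc i) \<in> V - {v} \<and> E (f i) (f (Suc i))" and inj: "inj_on f {0..n}"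
      using path_inj_ex by metis
    define W where "W = f ` {0..n}"
    have fW: "\<And>t. t \<le> n \<Longrightarrow> f t \<in> W" unfolding W_def by simp
    have WV: "W \<subseteq> V - {v}"
    proof
      fix z assume "z \<in> W"
      then obtain t where t: "t \<le> n" "z = f t" unfolding W_def by auto
      show "z \<in> V - {v}"
      proof (cases "t < n")
        case True then show ?thesis using f(3) t by blast
      next
        case False
        then have "t = n" using t by simp
        then show ?thesis using t f(2) b bv B2V by blast
      qed
    qed
    have e: "\<forall>t<n. E (f t) (f (Suc t))" using f(3) by blast
    have aW: "a \<in> W" and bW: "b \<in> W" using fW[of 0] fW[of n] f by auto
    have Wreach: "\<forall>z\<in>W. reach E W z a"
    proof
      fix z assume "z \<in> W"
      then obtain t where t: "t \<le> n" "z = f t" unfolding W_def by auto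
      show "reach E W z a" using path_down[where n=n and f=f and E=E, OF sym e t(1)] fW t f(1) by simp
    qed
    have seg: "\<forall>z\<in>W - {f j}. reach E (W - {f j}) z a \<and> a \<noteq> f j \<or> reach E (W - {f j}) z b \<and> b \<noteq> f j"
      if j: "j \<le> n" for j
    proof
      fix z assume "z \<in> W - {f j}"
      then obtain i where i: "i \<le> n" "z = f i" "f i \<noteq> f j" unfolding W_def by auto
      then have ij: "i \<noteq> j" by blast
      show "reach E (W - {f j}) z a \<and> a \<noteq> f j \<or> reach E (W - {f j}) z b \<and> b \<noteq> f j"
      proof (cases "i < j")
        case True
        have "\<forall>t\<le>i. f t \<in> W - {f j}"
        proof (intro allI impI)
          fix t assume "t \<le> i"
          then have "t \<noteq> j" "t \<le> n" "j \<le> n" using True j by auto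
          then have "f t \<noteq> f j" using inj unfolding inj_on_def by auto
          then show "f t \<in> W - {f j}" using fW \<open>t \<le> n\<close> by blast
        qed
        then have "reach E (W - {f j}) z a" using path_down[where n=n and f=f and E=E, OF sym e i(1)] i(2) f(1) by simp
        moreover have "a \<noteq> f j" using inj f(1) True j unfolding inj_on_def by force
        ultimately show ?thesis by blast
      next
        case False
        then have ji: "j < i" using ij by simp
        have "\<forall>t. n - (n - i) \<le> t \<and> t \<le> n \<longrightarrow> f t \<in> W - {f j}"
        proof (intro allI impI)
          fix t assume "n - (n - i) \<le> t \<and> t \<le> n"
          then have "t \<noteq> j" "t \<le> n" "j \<le> n" using ji j i by auto
          then have "f t \<noteq> f j" using inj unfolding inj_on_def by auto
          then show "f t \<in> W - {f j}" using fW \<open>t \<le> n\<close> by blast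
        qed
        then have "reach E (W - {f j}) (f (n - (n - i))) (f n)" using path_up[where n=n and f=f and E=E and X="W - {f j}" and d="n - i", OF e] by simp
        then have "reach E (W - {f j}) z b" using i f(2) by simp
        moreover have "b \<noteq> f j" using inj f(2) ji i j unfolding inj_on_def by force
        ultimately show ?thesis by blast
      qed
    qed
    define U where "U = B1 \<union> B2 \<union> W"
    have B1con: "connected_on E B1" and B2con: "connected_on E B2" using nonsep_conn[OF ns1] nonsep_conn[OF ns2] by blast+
    have B1r: "\<And>z. z \<in> B1 \<Longrightarrow> reach E U z v"
      using B1con B(4) reach_mono[of E B1 _ v U] unfolding connected_on_reach U_def by blast
    have B2r: "\<And>z. z \<in> B2 \<Longrightarrow> reach E U z v"
      using B2con B(5) reach_mono[of E B2 _ v U] unfolding connected_on_reach U_def by blast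
    have nsU: "nonseparable V E U"
      unfolding nonseparable_def
    proof (intro conjI ballI impI)
      show "U \<subseteq> V" unfolding U_def using B1V B2V WV by blast
      show "connected_on E U"
      proof (rule connected_hub[OF sym, of v])
        show "v \<in> U" unfolding U_def using B by blast
        show "\<forall>x\<in>U. reach E U x v"
        proof
          fix x assume "x \<in> U"
          then consider "x \<in> B1" | "x \<in> B2" | "x \<in> W" unfolding U_def by blast
          then show "reach E U x v"
          proof cases
            case 1 then show ?thesis by (rule B1r)
          next
            case 2 then show ?thesis by (rule B2r)
          next
            case 3
            then have "reach E W x a" using Wreach by blast
            then have "reach E U x a" using reach_mono[of E W x a U] unfolding U_def by blast
            then show ?thesis using B1r[OF a(1)] reach_trans by metis
          qed
        qed
      qed
      fix y assume yU: "y \<in> U" and ne: "U - {y} \<noteq> {}"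
      show "connected_on E (U - {y})"
      proof (cases "y = v")
        case True
        have "B1 - {v} \<noteq> {}" using a by blast
        then have B1v: "connected_on E (B1 - {v})" using nonsep_remove[OF ns1 B(4)] by blast
        have "B2 - {v} \<noteq> {}" using b bv by blast
        then have B2v: "connected_on E (B2 - {v})" using nonsep_remove[OF ns2 B(5)] by blast
        show ?thesis
        proof (rule connected_hub[OF sym, of a])
          show "a \<in> U - {y}" using a True unfolding U_def by blast
          show "\<forall>x\<in>U - {y}. reach E (U - {y}) x a"
          proof
            fix x assume x: "x \<in> U - {y}"
            have Wr: "reach E (U - {y}) z a" if "z \<in> W" for z
            proof -
              have "reach E W z a" using Wreach that by blast
              moreover have "W \<subseteq> U - {y}" using WV True unfolding U_def by blast
              ultimately show ?thesis using reach_mono by metis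
            qed
            from x consider "x \<in> B1 - {v}" | "x \<in> B2 - {v}" | "x \<in> W" unfolding U_def using True by blast
            then show "reach E (U - {y}) x a"
            proof cases
              case 1
              then have "reach E (B1 - {v}) x a" using B1v a unfolding connected_on_reach by blast
              moreover have "B1 - {v} \<subseteq> U - {y}" unfolding U_def using True by blast
              ultimately show ?thesis using reach_mono by metis
            next
              case 2
              then have "reach E (B2 - {v}) x b" using B2v b bv unfolding connected_on_reach by blast
              moreover have "B2 - {v} \<subseteq> U - {y}" unfolding U_def using True by blast
              ultimately have "reach E (U - {y}) x b" using reach_mono by metis
              then show ?thesis using Wr[OF bW] reach_trans by metis
            next
              case 3 then show ?thesis by (rule Wr)
            qed
          qed
        qed
      next
        case False
        have Bir: "reach E (U - {y}) z v" if "z \<in> Bi" "v \<in> Bi" "nonseparable V E Bi" "Bi \<subseteq> U" "z \<noteq> y" for z Bi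
        proof -
          have "Bi - {y} \<noteq> {}" using that False by blast
          then have "connected_on E (Bi - {y})"
          proof (cases "y \<in> Bi")
            case True then show ?thesis using nonsep_remove[OF that(3) True] \<open>Bi - {y} \<noteq> {}\<close> by blast
          next
            case False then show ?thesis using nonsep_conn[OF that(3)] by simp
          qed
          then have "reach E (Bi - {y}) z v" using that False unfolding connected_on_reach by blast
          moreover have "Bi - {y} \<subseteq> U - {y}" using that(4) by blast
          ultimately show ?thesis using reach_mono by metis
        qed
        have B1U: "B1 \<subseteq> U" and B2U: "B2 \<subseteq> U" unfolding U_def by blast+
        show ?thesis
        proof (rule connected_hub[OF sym, of v])
          show "v \<in> U - {y}" using False B unfolding U_def by blast
          show "\<forall>x\<in>U - {y}. reach E (U - {y}) x v"
          proof
            fix x assume x: "x \<in> U - {y}"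
            from x consider "x \<in> B1" | "x \<in> B2" | "x \<in> W" unfolding U_def by blast
            then show "reach E (U - {y}) x v"
            proof cases
              case 1 then show ?thesis using Bir[OF _ B(4) ns1 B1U] x by blast
            next
              case 2 then show ?thesis using Bir[OF _ B(5) ns2 B2U] x by blast
            next
              case 3
              show ?thesis
              proof (cases "y \<in> W")
                case False
                have "reach E W x a" using Wreach 3 by blast
                moreover have "W \<subseteq> U - {y}" using False unfolding U_def by blast
                ultimately have "reach E (U - {y}) x a" using reach_mono by metis
                moreover have "a \<noteq> y" using False aW by blast
                ultimately show ?thesis using Bir[OF a(1) B(4) ns1 B1U] reach_trans by metis
              next
                case True
                then obtain j where j: "j \<le> n" "y = f j" unfolding W_def by auto
                have xW: "x \<in> W - {f j}" using x 3 j by blast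
                have WU: "W - {f j} \<subseteq> U - {y}" using j unfolding U_def by blast
                from seg[OF j(1)] xW
                have "reach E (W - {f j}) x a \<and> a \<noteq> f j \<or> reach E (W - {f j}) x b \<and> b \<noteq> f j" by blast
                then show ?thesis
                proof
                  assume h: "reach E (W - {f j}) x a \<and> a \<noteq> f j"
                  then have "reach E (U - {y}) x a" using WU reach_mono by metis
                  then show ?thesis using h j Bir[OF a(1) B(4) ns1 B1U] reach_trans by metis
                next
                  assume h: "reach E (W - {f j}) x b \<and> b \<noteq> f j"
                  then have "reach E (U - {y}) x b" using WU reach_mono by metis
                  then show ?thesis using h j Bir[OF b(1) B(5) ns2 B2U] reach_trans by metis
                qed
              qed
            qed
          qed
        qed
      qed
    qed
    have "U = B1" using max1[OF nsU] unfolding U_def by blast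
    moreover have "U = B2" using max2[OF nsU] unfolding U_def by blast
    ultimately show False using B(3) by simp
  qed
  then show ?thesis unfolding block_vertex_def using vV by blast
qed



lemma C3:
  assumes sym: "\<forall>x y. E x y \<longrightarrow> E y x" and finV: "finite V" and AV: "A \<subseteq> V"
    and Acon: "connected_on E A" and vA: "v \<in> A" and vK: "v \<in> K"
    and K: "K = gcomp E (V - {c}) x" and cV: "c \<in> V" and xV: "x \<in> V - {c}" and four: "4 \<le> ncomp E (A - {v})"
  shows "3 \<le> ncomp E (gcomp E (A \<inter> K) v - {v})"
proof -
  define M where "M = gcomp E (A \<inter> K) v"
  have "v \<in> A \<inter> K" using vA vK by blast
  then have MAK: "M \<subseteq> A \<inter> K" unfolding M_def using comp_sub by metis
  have finM: "finite M" using MAK AV finV by (meson finite_subset inf.coboundedI1)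
  have KV: "K \<subseteq> V - {c}" unfolding K using comp_sub xV by metis
  define F where "F = {C \<in> gcomp E (A - {v}) ` (A - {v}). c \<notin> C}"
  have finA: "finite (A - {v})" using AV finV by (meson finite_Diff finite_subset)
  have sub1: "gcomp E (A - {v}) ` (A - {v}) \<subseteq> F \<union> {gcomp E (A - {v}) c}"
  proof
    fix C assume C: "C \<in> gcomp E (A - {v}) ` (A - {v})"
    show "C \<in> F \<union> {gcomp E (A - {v}) c}"
    proof (cases "c \<in> C")
      case True
      obtain y where "y \<in> A - {v}" "C = gcomp E (A - {v}) y" using C by blast
      then have "gcomp E (A - {v}) c = C" using comp_eq[OF sym] True by metis
      then show ?thesis by blast
    next
      case False then show ?thesis unfolding F_def using C by blast
    qed
  qed
  have finF: "finite F" unfolding F_def using finA by simp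
  have "ncomp E (A - {v}) \<le> card (F \<union> {gcomp E (A - {v}) c})"
    unfolding ncomp_def using sub1 finF by (intro card_mono) auto
  also have "\<dots> \<le> card F + 1" using card_Un_le[of F "{gcomp E (A - {v}) c}"] by simp
  finally have Fge: "3 \<le> card F" using four by simp
  have sub2: "F \<subseteq> gcomp E (M - {v}) ` (M - {v})"
  proof
    fix C assume CF: "C \<in> F"
    then obtain y where y: "y \<in> A - {v}" "C = gcomp E (A - {v}) y" and cC: "c \<notin> C" unfolding F_def by blast
    obtain u where u: "u \<in> C" "E u v" using comp_adj[OF sym Acon vA y(1)] y(2) by blast
    have Csub: "C \<subseteq> A - {v}" using comp_sub y by metis
    have Ccon: "connected_on E C" using comp_connected[OF sym] y(2) by metis
    have CVc: "C \<subseteq> V - {c}" using Csub AV cC by blast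
    have "reach E (V - {c}) x v" using vK unfolding K gcomp_def by simp
    moreover have "reach E (V - {c}) v u"
      using u CVc KV vK sym by (intro reach_edge) auto
    ultimately have xu: "reach E (V - {c}) x u" using reach_trans by metis
    have CK: "C \<subseteq> K"
    proof
      fix z assume "z \<in> C"
      then have "reach E C u z" using Ccon u(1) unfolding connected_on_reach by blast
      then have "reach E (V - {c}) u z" using CVc reach_mono by metis
      then have "reach E (V - {c}) x z" using xu reach_trans by metis
      then show "z \<in> K" unfolding K gcomp_def by simp
    qed
    have CAK: "C \<subseteq> A \<inter> K" using CK Csub by blast
    have vu: "reach E (A \<inter> K) v u" using u CAK vA vK sym by (intro reach_edge) auto
    have CM: "C \<subseteq> M - {v}"
    proof
      fix z assume z: "z \<in> C"
      then have "reach E C u z" using Ccon u(1) unfolding connected_on_reach by blast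
      then have "reach E (A \<inter> K) u z" using CAK reach_mono by metis
      then have "reach E (A \<inter> K) v z" using vu reach_trans by metis
      then show "z \<in> M - {v}" unfolding M_def gcomp_def using z Csub by blast
    qed
    have "C = gcomp E (M - {v}) u"
    proof
      show "C \<subseteq> gcomp E (M - {v}) u"
      proof
        fix z assume "z \<in> C"
        then have "reach E C u z" using Ccon u(1) unfolding connected_on_reach by blast
        then have "reach E (M - {v}) u z" using CM reach_mono by metis
        then show "z \<in> gcomp E (M - {v}) u" unfolding gcomp_def by simp
      qed
      show "gcomp E (M - {v}) u \<subseteq> C"
      proof
        fix z assume "z \<in> gcomp E (M - {v}) u"
        then have "reach E (M - {v}) u z" unfolding gcomp_def by simp
        moreover have "M - {v} \<subseteq> A - {v}" using MAK by blast
        ultimately have "reach E (A - {v}) u z" using reach_mono by metis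
        then have "z \<in> gcomp E (A - {v}) u" unfolding gcomp_def by simp
        moreover have "gcomp E (A - {v}) u = C" using comp_eq[OF sym] u(1) y(2) by metis
        ultimately show "z \<in> C" by simp
      qed
    qed
    moreover have "u \<in> M - {v}" using CM u(1) by blast
    ultimately show "C \<in> gcomp E (M - {v}) ` (M - {v})" by blast
  qed
  have "card F \<le> ncomp E (M - {v})"
    unfolding ncomp_def using sub2 finM by (intro card_mono) auto
  then show ?thesis using Fge unfolding M_def by simp
qed

lemma bad_count:
  assumes sym: "\<forall>x y. E x y \<longrightarrow> E y x" and irr: "\<forall>x. \<not> E x x" and finV: "finite V"
    and P: "conn_partition V E k P" and cV: "c \<in> V" and xV: "x \<in> V - {c}"
    and K: "K = gcomp E (V - {c}) x"
  shows "2 * card {v\<in>K. \<exists>A\<in>P. v \<in> A \<and> 4 \<le> ncomp E (A - {v})} < card K"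
proof -
  let ?B = "{v\<in>K. \<exists>A\<in>P. v \<in> A \<and> 4 \<le> ncomp E (A - {v})}"
  have KV: "K \<subseteq> V - {c}" unfolding K using comp_sub xV by metis
  have finK: "finite K" using KV finV by (meson finite_Diff finite_subset)
  have finP: "finite P" using cpF[OF P] .
  have subB: "?B \<subseteq> (\<Union>A\<in>P. beta E (A \<inter> K))"
  proof
    fix v assume "v \<in> ?B"
    then obtain A where A: "A \<in> P" "v \<in> A" "4 \<le> ncomp E (A - {v})" and vK: "v \<in> K" by blast
    have "3 \<le> ncomp E (gcomp E (A \<inter> K) v - {v})"
      using C3[OF sym finV cpS[OF P A(1)] cpC[OF P A(1)] A(2) vK K cV xV A(3)] .
    then have "v \<in> beta E (A \<inter> K)" unfolding beta_def using A(2) vK by blast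
    then show "v \<in> (\<Union>A\<in>P. beta E (A \<inter> K))" using A(1) by blast
  qed
  have finBeta: "\<And>A. finite (beta E (A \<inter> K))" unfolding beta_def using finK by simp
  have "card ?B \<le> card (\<Union>A\<in>P. beta E (A \<inter> K))"
    using subB finP finBeta by (intro card_mono) auto
  also have "\<dots> \<le> (\<Sum>A\<in>P. card (beta E (A \<inter> K)))" using card_UN_le[OF finP] .
  finally have c1: "2 * card ?B \<le> (\<Sum>A\<in>P. 2 * card (beta E (A \<inter> K)))"
    unfolding sum_distrib_left[symmetric] by simp
  have xK: "x \<in> K" unfolding K by (rule comp_self)
  obtain A0 where A0: "A0 \<in> P" "x \<in> A0" using cpU[OF P] xV by blast
  have le: "\<forall>A\<in>P. 2 * card (beta E (A \<inter> K)) \<le> card (A \<inter> K)"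
  proof
    fix A assume "A \<in> P"
    show "2 * card (beta E (A \<inter> K)) \<le> card (A \<inter> K)"
    proof (cases "A \<inter> K = {}")
      case True then show ?thesis unfolding beta_def by simp
    next
      case False
      then show ?thesis using beta_count[OF sym irr, of "A \<inter> K"] finK by simp
    qed
  qed
  have lt: "\<exists>A\<in>P. 2 * card (beta E (A \<inter> K)) < card (A \<inter> K)"
  proof
    show "2 * card (beta E (A0 \<inter> K)) < card (A0 \<inter> K)"
      using beta_count[OF sym irr, of "A0 \<inter> K"] finK A0 xK by blast
  qed (rule A0(1))
  have "(\<Sum>A\<in>P. 2 * card (beta E (A \<inter> K))) < (\<Sum>A\<in>P. card (A \<inter> K))"
    by (rule sum_strict_mono_ex1[OF finP le lt])
  also have "(\<Sum>A\<in>P. card (A \<inter> K)) = card (\<Union>A\<in>P. A \<inter> K)"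
  proof (rule card_UN_disjoint[symmetric, OF finP])
    show "\<forall>A\<in>P. finite (A \<inter> K)" using finK by simp
    show "\<forall>A\<in>P. \<forall>B\<in>P. A \<noteq> B \<longrightarrow> A \<inter> K \<inter> (B \<inter> K) = {}" using cpD[OF P] by blast
  qed
  also have "(\<Union>A\<in>P. A \<inter> K) = K" using cpU[OF P] KV by blast
  finally show ?thesis using c1 by simp
qed

theorem mainTheorem2:
  fixes V :: "'a set" and E :: "'a \<Rightarrow> 'a \<Rightarrow> bool" and k :: nat and P1 P2 :: "'a set set"
  assumes "simple_graph V E" and "connected_on E V" and "k \<ge> 2"
    and "conn_partition V E k P1" and "conn_partition V E k P2"
  shows "\<exists>v. block_vertex V E v \<and>
    (\<exists>n Q1. n \<le> 3 \<and> (recomb_move V E k ^^ n) P1 Q1 \<and> conn_partition V E k Q1 \<and> {v} \<in> Q1) \<and>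
    (\<exists>n Q2. n \<le> 3 \<and> (recomb_move V E k ^^ n) P2 Q2 \<and> conn_partition V E k Q2 \<and> {v} \<in> Q2)"
proof -
  note G = assms(1) and con = assms(2) and k = assms(3) and P1 = assms(4) and P2 = assms(5)
  have sym: "\<forall>x y. E x y \<longrightarrow> E y x" and irr: "\<forall>x. \<not> E x x" and finV: "finite V"
    using G unfolding simple_graph_def by blast+
  have "card P1 \<ge> 2" using cpK[OF P1] k by simp
  have "\<not> P1 \<subseteq> {{}}"
  proof
    assume "P1 \<subseteq> {{}}"
    then have "card P1 \<le> card {{}::'a set}" by (intro card_mono) auto
    then show False using \<open>card P1 \<ge> 2\<close> by simp
  qed
  then obtain X where X: "X \<in> P1" by blast
  have "\<not> P1 \<subseteq> {X}"
  proof
    assume "P1 \<subseteq> {X}"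
    then have "card P1 \<le> card {X}" by (intro card_mono) auto
    then show False using \<open>card P1 \<ge> 2\<close> by simp
  qed
  then obtain Y where Y: "Y \<in> P1" "Y \<noteq> X" by blast
  obtain p where p: "p \<in> X" using cpN[OF P1 X] by blast
  obtain q where q: "q \<in> Y" using cpN[OF P1 Y(1)] by blast
  have pq: "p \<noteq> q" using cpD[OF P1 X Y(1)] Y(2) p q by blast
  have pV: "p \<in> V" and qV: "q \<in> V" using cpS[OF P1 X] cpS[OF P1 Y(1)] p q by blast+
  have two: "2 \<le> card V"
  proof -
    have "card {p, q} \<le> card V" using pV qV finV by (intro card_mono) auto
    then show ?thesis using pq by simp
  qed
  obtain c x where cx: "c \<in> V" "x \<in> V - {c}" and nc: "\<forall>w\<in>gcomp E (V - {c}) x. connected_on E (V - {w})"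
    using noncut_comp[OF sym finV con two] by blast
  define K where "K = gcomp E (V - {c}) x"
  have KV: "K \<subseteq> V - {c}" unfolding K_def using comp_sub cx(2) by metis
  have finK: "finite K" using KV finV by (meson finite_Diff finite_subset)
  define B1 where "B1 = {v\<in>K. \<exists>A\<in>P1. v \<in> A \<and> 4 \<le> ncomp E (A - {v})}"
  define B2 where "B2 = {v\<in>K. \<exists>A\<in>P2. v \<in> A \<and> 4 \<le> ncomp E (A - {v})}"
  have b1: "2 * card B1 < card K" unfolding B1_def using bad_count[OF sym irr finV P1 cx K_def] .
  have b2: "2 * card B2 < card K" unfolding B2_def using bad_count[OF sym irr finV P2 cx K_def] .
  have "\<not> K \<subseteq> B1 \<union> B2"
  proof
    assume "K \<subseteq> B1 \<union> B2"
    then have "card K \<le> card (B1 \<union> B2)" using finK unfolding B1_def B2_def by (intro card_mono) auto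
    also have "\<dots> \<le> card B1 + card B2" by (rule card_Un_le)
    finally show False using b1 b2 by simp
  qed
  then obtain v where vK: "v \<in> K" and vB1: "v \<notin> B1" and vB2: "v \<notin> B2" by blast
  have vV: "v \<in> V" using vK KV by blast
  have Vv: "connected_on E (V - {v})" using nc vK unfolding K_def by blast
  have bv: "block_vertex V E v" using block_vertex_if[OF sym irr con vV Vv] .
  have good: "\<exists>n Q. n \<le> 3 \<and> (recomb_move V E k ^^ n) P Q \<and> conn_partition V E k Q \<and> {v} \<in> Q"
    if P: "conn_partition V E k P" and vB: "v \<notin> {v\<in>K. \<exists>A\<in>P. v \<in> A \<and> 4 \<le> ncomp E (A - {v})}" for P
  proof -
    obtain A where A: "A \<in> P" "v \<in> A" using cpU[OF P] vV by blast
    have "ncomp E (A - {v}) \<le> 3" using vB vK A by auto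
    moreover obtain n Q where "n \<le> ncomp E (A - {v})" "(recomb_move V E k ^^ n) P Q"
        "conn_partition V E k Q" "{v} \<in> Q"
      using greedy[OF sym G Vv k P A] by blast
    ultimately show ?thesis by (meson le_trans)
  qed
  show ?thesis
    using bv good[OF P1 vB1[unfolded B1_def]] good[OF P2 vB2[unfolded B2_def]] by blast
qed

end
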